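(* Let $G=(V,R,E)$ be a finite bipartite version–record graph whose version graph $\mathbb{G}$ is a DAG (possibly with merges), and let $0<\delta\le1$. Let $\hat{\mathbb{T}}$ be the version tree obtained from $\mathbb{G}$ by keeping, for each version with several incoming edges, only one incoming edge of maximum weight, and let $\hat{G}$ and $\hat R$ be as defined below. Applying LyreSplit with parameter $\delta$ to $\hat{\mathbb{T}}$ (with bipartite graph $\hat{G}$) yields a partition of $V$ whose storage cost is at most $\frac{|R|+|\hat R|}{|R|}(1+\delta)^{\ell}\cdot|R|$ and whose average checkout cost is at most $\frac1\delta\cdot\frac{|E|}{|V|}$; i.e., it is a $\left(\frac{|R|+|\hat R|}{|R|}(1+\delta)^{\ell},\frac1\delta\right)$-approximation, where $\ell$ is the recursion level at which LyreSplit terminates.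
   Context: $(v,r)\in E$ means version $v$ contains record $r$; $R(v)=\{r:(v,r)\in E\}$, $R=\bigcup_vR(v)$. The version graph $\mathbb{G}=(V,\mathbb{E})$ is a DAG whose edges go from a parent version to a derived child version, with weights $w(v_i,v_j)=|R(v_i)\cap R(v_j)|$; every non-root version has at least one parent. $\hat{G}=(V,R\cup\hat R,\hat E)$ is the bipartite graph corresponding to $\hat{\mathbb{T}}$: for a merged version $v_k$, records of $v_k$ not inherited from its retained parent are treated as newly created records in $\hat{\mathbb{T}}$ (even if equal to records of another parent); $\hat R$ is the set of these additional duplicated records, so $\hat G$ has $|R|+|\hat R|$ records and $|\hat E|=|E|$ edges, and each record's set of containing versions is a connected subtree of $\hat{\mathbb{T}}$. LyreSplit on a subtree of $\hat{\mathbb T}$ with version set $V'$, record set $R'$ (records of $\hat G$ in versions of $V'$) and edge count $|E'|$: if $|R'||V'|<|E'|/\delta$ return $V'$ as one block; otherwise remove any tree edge $e$ of the subtree with $w(e)\le\delta|R'|$ (weights computed in $\hat G$) and recurse on the two resulting subtrees. The initial call is at recursion level $0$; $\ell$ is the largest level reached. The storage cost of a partition $\mathcal{V}_1,\dots,\mathcal{V}_K$ is $\sum_k|\mathcal{R}_k|$ and the average checkout cost is $\frac1{|V|}\sum_k|\mathcal{V}_k||\mathcal{R}_k|$, where $\mathcal{R}_k$ is the set of records contained in versions of $\mathcal{V}_k$. An $(X,Y)$-approximation has storage cost at most $X|R|$ and average checkout cost at most $Y\frac{|E|}{|V|}$. *)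

theory Defs
  imports Complex_Main
begin

definition Rv :: "('v \<times> 'r) set \<Rightarrow> 'v \<Rightarrow> 'r set" where
  "Rv E v = {r. (v, r) \<in> E}"

definition wt :: "('v \<times> 'r) set \<Rightarrow> 'v \<Rightarrow> 'v \<Rightarrow> nat" where
  "wt E u v = card (Rv E u \<inter> Rv E v)"

text \<open>The tree \<open>\<hat>T\<close> is given by a parent function par (root v0).  In \<open>\<hat>G\<close> the copy of
  record r seen at version v is identified by the version where it was (re)created:
  walk up the retained-parent chain while the retained parent still contains r.\<close>
definition origin :: "('v \<times> 'r) set \<Rightarrow> ('v \<Rightarrow> 'v) \<Rightarrow> 'v \<Rightarrow> 'v \<Rightarrow> 'r \<Rightarrow> 'v" where
  "origin E par v0 v r =
     (par ^^ (LEAST n. (par ^^ n) v = v0 \<or> r \<notin> Rv E (par ((par ^^ n) v)))) v"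

definition hatRv :: "('v \<times> 'r) set \<Rightarrow> ('v \<Rightarrow> 'v) \<Rightarrow> 'v \<Rightarrow> 'v \<Rightarrow> ('r \<times> 'v) set" where
  "hatRv E par v0 v = (\<lambda>r. (r, origin E par v0 v r)) ` Rv E v"

definition hatRset :: "('v \<times> 'r) set \<Rightarrow> ('v \<Rightarrow> 'v) \<Rightarrow> 'v \<Rightarrow> 'v set \<Rightarrow> ('r \<times> 'v) set" where
  "hatRset E par v0 Vs = (\<Union>v\<in>Vs. hatRv E par v0 v)"

definition card_hatR :: "('v \<times> 'r) set \<Rightarrow> ('v \<Rightarrow> 'v) \<Rightarrow> 'v \<Rightarrow> 'v set \<Rightarrow> nat" where
  "card_hatR E par v0 V = card (hatRset E par v0 V) - card (snd ` E)"

text \<open>Number of bipartite edges incident to versions in Vs (same in G and \<open>\<hat>G\<close>).\<close>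
definition edges_in :: "('v \<times> 'r) set \<Rightarrow> 'v set \<Rightarrow> nat" where
  "edges_in E Vs = card {e \<in> E. fst e \<in> Vs}"

definition subtree_below :: "('v \<Rightarrow> 'v) \<Rightarrow> 'v \<Rightarrow> 'v set \<Rightarrow> 'v set" where
  "subtree_below par c Vs = {u \<in> Vs. \<exists>n. (par ^^ n) u = c}"

text \<open>LyreSplit (nondeterministic in the choice of the edge to remove).
  lyresplit \<delta> E par v0 Vs k P L: a call on the subtree with version set Vs at recursion
  level k may return the blocks P, with L the largest recursion level reached.\<close>
inductive lyresplit :: "real \<Rightarrow> ('v \<times> 'r) set \<Rightarrow> ('v \<Rightarrow> 'v) \<Rightarrow> 'v \<Rightarrow>
    'v set \<Rightarrow> nat \<Rightarrow> 'v set set \<Rightarrow> nat \<Rightarrow> bool"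
  for \<delta> E par v0 where
  leaf: "real (card (hatRset E par v0 Vs)) * real (card Vs) < real (edges_in E Vs) / \<delta>
         \<Longrightarrow> lyresplit \<delta> E par v0 Vs k {Vs} k"
| split: "\<not> (real (card (hatRset E par v0 Vs)) * real (card Vs) < real (edges_in E Vs) / \<delta>)
         \<Longrightarrow> c \<in> Vs \<Longrightarrow> c \<noteq> v0 \<Longrightarrow> par c \<in> Vs
         \<Longrightarrow> real (card (hatRv E par v0 (par c) \<inter> hatRv E par v0 c))
               \<le> \<delta> * real (card (hatRset E par v0 Vs))
         \<Longrightarrow> lyresplit \<delta> E par v0 (subtree_below par c Vs) (Suc k) P1 L1
         \<Longrightarrow> lyresplit \<delta> E par v0 (Vs - subtree_below par c Vs) (Suc k) P2 L2
         \<Longrightarrow> lyresplit \<delta> E par v0 Vs k (P1 \<union> P2) (max L1 L2)"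

definition block_recs :: "('v \<times> 'r) set \<Rightarrow> 'v set \<Rightarrow> 'r set" where
  "block_recs E B = (\<Union>v\<in>B. Rv E v)"

definition storage_cost :: "('v \<times> 'r) set \<Rightarrow> 'v set set \<Rightarrow> nat" where
  "storage_cost E P = (\<Sum>B\<in>P. card (block_recs E B))"

definition avg_checkout_cost :: "('v \<times> 'r) set \<Rightarrow> 'v set \<Rightarrow> 'v set set \<Rightarrow> real" where
  "avg_checkout_cost E V P =
     (\<Sum>B\<in>P. real (card B) * real (card (block_recs E B))) / real (card V)"

end

theory Submission
  imports Defs
begin

lemma reach_root:
  assumes finV: "finite V" and GEV: "GE \<subseteq> V \<times> V" and dag: "acyclic GE"
    and par_edge: "\<forall>v\<in>V. v \<noteq> v0 \<longrightarrow> (par v, v) \<in> GE"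
    and v: "v \<in> V"
  shows "\<exists>n. (par ^^ n) v = v0"
proof (rule ccontr)
  assume ne: "\<not> (\<exists>n. (par ^^ n) v = v0)"
  have fin: "finite GE" using finV GEV finite_subset by blast
  have wf: "wf GE" using finite_acyclic_wf[OF fin dag] .
  have inV: "(par ^^ n) v \<in> V" for n
  proof (induction n)
    case 0 then show ?case using v by simp
  next
    case (Suc n)
    have "(par ((par ^^ n) v), (par ^^ n) v) \<in> GE" using par_edge Suc ne by blast
    then show ?case using GEV by auto
  qed
  have "\<forall>i. ((par ^^ Suc i) v, (par ^^ i) v) \<in> GE"
    using par_edge inV ne by auto
  define f where "f = (\<lambda>i. (par ^^ i) v)"
  have "\<forall>i. (f (Suc i), f i) \<in> GE" unfolding f_def using par_edge inV ne by auto
  then show False using wf unfolding wf_iff_no_infinite_down_chain by blast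
qed

lemma chain:
  assumes ex: "\<exists>n. (par ^^ n) v = v0" and j: "j \<le> (LEAST n. (par ^^ n) v = v0 \<or> r \<notin> Rv E (par ((par ^^ n) v)))"
    and rv: "r \<in> Rv E v"
  shows "r \<in> Rv E ((par ^^ j) v) \<and> origin E par v0 ((par ^^ j) v) r = origin E par v0 v r"
proof -
  define Q where "Q = (\<lambda>w i. (par ^^ i) w = v0 \<or> r \<notin> Rv E (par ((par ^^ i) w)))"
  define m where "m = (LEAST n. Q v n)"
  have mj: "j \<le> m" using j unfolding m_def Q_def .
  have exQ: "\<exists>n. Q v n" using ex unfolding Q_def by blast
  have Qm: "Q v m" unfolding m_def using exQ by (metis LeastI)
  have nQ: "\<not> Q v i" if "i < m" for i using that unfolding m_def using not_less_Least by blast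
  have shift: "Q ((par ^^ j) v) i = Q v (i + j)" for i
    unfolding Q_def by (simp add: funpow_add)
  have L: "(LEAST i. Q ((par ^^ j) v) i) = m - j"
  proof (rule Least_equality)
    show "Q ((par ^^ j) v) (m - j)" using shift Qm mj by simp
  next
    fix y assume "Q ((par ^^ j) v) y"
    then have "Q v (y + j)" using shift by simp
    then have "\<not> (y + j < m)" using nQ by blast
    then show "m - j \<le> y" by simp
  qed
  have o1: "origin E par v0 ((par ^^ j) v) r = (par ^^ (m - j)) ((par ^^ j) v)"
    using L unfolding origin_def Q_def by simp
  also have "\<dots> = (par ^^ m) v" using mj by (metis funpow_add comp_apply le_add_diff_inverse2)
  also have "\<dots> = origin E par v0 v r" unfolding origin_def m_def Q_def by simp
  finally have o: "origin E par v0 ((par ^^ j) v) r = origin E par v0 v r" .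
  have "r \<in> Rv E ((par ^^ j) v)"
  proof (cases j)
    case 0 then show ?thesis using rv by simp
  next
    case (Suc i)
    then have "\<not> Q v i" using nQ mj by simp
    then show ?thesis unfolding Q_def using Suc by simp
  qed
  with o show ?thesis by simp
qed

lemma finite_Rv: "finite E \<Longrightarrow> finite (Rv E v)"
proof -
  assume "finite E"
  moreover have "Rv E v \<subseteq> snd ` E" unfolding Rv_def by force
  ultimately show ?thesis using finite_subset by blast
qed

lemma finite_hatRset: "finite E \<Longrightarrow> finite Vs \<Longrightarrow> finite (hatRset E par v0 Vs)"
  unfolding hatRset_def hatRv_def by (simp add: finite_Rv)

lemma fst_hatRset: "fst ` hatRset E par v0 B = block_recs E B"
  unfolding hatRset_def hatRv_def block_recs_def by (simp add: image_UN image_image)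

lemma card_block_recs: "finite E \<Longrightarrow> finite B \<Longrightarrow> card (block_recs E B) \<le> card (hatRset E par v0 B)"
proof -
  assume a: "finite E" "finite B"
  have "card (fst ` hatRset E par v0 B) \<le> card (hatRset E par v0 B)"
    by (rule card_image_le[OF finite_hatRset[OF a]])
  then show ?thesis by (simp add: fst_hatRset)
qed

lemma hatRset_Un: "hatRset E par v0 (A \<union> B) = hatRset E par v0 A \<union> hatRset E par v0 B"
  unfolding hatRset_def by auto

lemma shared:
  assumes reach: "\<forall>v\<in>V. \<exists>n. (par ^^ n) v = v0" and VsV: "Vs \<subseteq> V"
    and x: "x \<in> hatRset E par v0 (subtree_below par c Vs) \<inter> hatRset E par v0 (Vs - subtree_below par c Vs)"
  shows "x \<in> hatRv E par v0 (par c) \<inter> hatRv E par v0 c"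
proof -
  define S where "S = subtree_below par c Vs"
  from x obtain u r where u: "u \<in> S" and r: "r \<in> Rv E u" and xu: "x = (r, origin E par v0 u r)"
    unfolding S_def hatRset_def hatRv_def by blast
  from x obtain u' r' where u': "u' \<in> Vs - S" and r': "r' \<in> Rv E u'" and xu': "x = (r', origin E par v0 u' r')"
    unfolding S_def hatRset_def hatRv_def by blast
  have rr: "r' = r" using xu xu' by simp
  define Q where "Q = (\<lambda>w i. (par ^^ i) w = v0 \<or> r \<notin> Rv E (par ((par ^^ i) w)))"
  define m where "m = (LEAST n. Q u n)"
  define m' where "m' = (LEAST n. Q u' n)"
  have ou: "origin E par v0 u r = (par ^^ m) u" unfolding origin_def m_def Q_def by simp
  have ou': "origin E par v0 u' r = (par ^^ m') u'" unfolding origin_def m'_def Q_def by simp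
  have same: "(par ^^ m) u = (par ^^ m') u'" using xu xu' rr ou ou' by simp
  from u obtain n where n: "(par ^^ n) u = c" and uVs: "u \<in> Vs" unfolding S_def subtree_below_def by blast
  have u'V: "u' \<in> V" "u \<in> V" using u' uVs VsV by auto
  have nm: "n < m"
  proof (rule ccontr)
    assume "\<not> n < m"
    then have "n = (n - m) + m" by simp
    then have "(par ^^ (n - m)) ((par ^^ m) u) = c" using n by (metis funpow_add comp_apply)
    then have "(par ^^ (n - m)) ((par ^^ m') u') = c" using same by simp
    then have "(par ^^ (n - m + m')) u' = c" by (simp add: funpow_add)
    then have "u' \<in> S" using u' unfolding S_def subtree_below_def by blast
    then show False using u' by blast
  qed
  have ex: "\<exists>n. (par ^^ n) u = v0" using reach u'V by blast
  have c1: "r \<in> Rv E ((par ^^ n) u) \<and> origin E par v0 ((par ^^ n) u) r = origin E par v0 u r"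
    using chain[OF ex _ r, of n] nm unfolding m_def Q_def by simp
  have c2: "r \<in> Rv E ((par ^^ Suc n) u) \<and> origin E par v0 ((par ^^ Suc n) u) r = origin E par v0 u r"
    using chain[OF ex _ r, of "Suc n"] nm unfolding m_def Q_def by simp
  have "x \<in> hatRv E par v0 c" using c1 n xu unfolding hatRv_def by auto
  moreover have "x \<in> hatRv E par v0 (par c)" using c2 n xu unfolding hatRv_def by auto
  ultimately show ?thesis by blast
qed

lemma struct:
  assumes "lyresplit \<delta> E par v0 Vs k P L" and "\<delta> > 0"
  shows "finite P \<and> \<Union>P = Vs \<and> (\<forall>B\<in>P. B \<noteq> {}) \<and> pairwise disjnt P \<and> k \<le> L"
  using assms
proof (induction rule: lyresplit.induct)
  case (leaf Vs k)
  have "Vs \<noteq> {}"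
  proof
    assume "Vs = {}"
    then show False using leaf(1) unfolding edges_in_def hatRset_def by simp
  qed
  then show ?case by simp
next
  case (split Vs c k P1 L1 P2 L2)
  define S where "S = subtree_below par c Vs"
  have SV: "S \<subseteq> Vs" unfolding S_def subtree_below_def by blast
  have u1: "\<Union>P1 = S" and u2: "\<Union>P2 = Vs - S" using split S_def by auto
  have d: "disjnt B1 B2" if "B1 \<in> P1" "B2 \<in> P2" for B1 B2
    using that u1 u2 unfolding disjnt_def by blast
  have "pairwise disjnt (P1 \<union> P2)"
    using split d unfolding pairwise_def by (metis Un_iff disjnt_sym)
  then show ?case using split SV u1 u2 by auto
qed

lemma costs:
  assumes "lyresplit \<delta> E par v0 Vs k P L" and dpos: "\<delta> > 0" and finE: "finite E" and finV: "finite V"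
    and reach: "\<forall>v\<in>V. \<exists>n. (par ^^ n) v = v0"
  shows "Vs \<subseteq> V \<Longrightarrow> (\<Sum>B\<in>P. real (card (hatRset E par v0 B))) \<le> real (card (hatRset E par v0 Vs)) * (1 + \<delta>) ^ (L - k)
     \<and> (\<Sum>B\<in>P. real (card B) * real (card (block_recs E B))) \<le> real (edges_in E Vs) / \<delta>"
  using assms(1)
proof (induction rule: lyresplit.induct)
  case (leaf Vs k)
  have fVs: "finite Vs" using leaf(2) finV finite_subset by blast
  have "real (card Vs) * real (card (block_recs E Vs)) \<le> real (card Vs) * real (card (hatRset E par v0 Vs))"
    using card_block_recs[OF finE fVs, of par v0] by (simp add: mult_left_mono)
  also have "\<dots> \<le> real (edges_in E Vs) / \<delta>" using leaf(1) by (simp add: mult.commute)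
  finally show ?case by simp
next
  case (split Vs c k P1 L1 P2 L2)
  define S where "S = subtree_below par c Vs"
  have SV: "S \<subseteq> Vs" unfolding S_def subtree_below_def by blast
  have fVs: "finite Vs" using split.prems finV finite_subset by blast
  have fS: "finite S" "finite (Vs - S)" using fVs SV finite_subset by auto
  have IH1: "(\<Sum>B\<in>P1. real (card (hatRset E par v0 B))) \<le> real (card (hatRset E par v0 S)) * (1 + \<delta>) ^ (L1 - Suc k)
     \<and> (\<Sum>B\<in>P1. real (card B) * real (card (block_recs E B))) \<le> real (edges_in E S) / \<delta>"
    using split.IH(1) split.prems SV unfolding S_def by blast
  have IH2: "(\<Sum>B\<in>P2. real (card (hatRset E par v0 B))) \<le> real (card (hatRset E par v0 (Vs - S))) * (1 + \<delta>) ^ (L2 - Suc k)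
     \<and> (\<Sum>B\<in>P2. real (card B) * real (card (block_recs E B))) \<le> real (edges_in E (Vs - S)) / \<delta>"
    using split.IH(2) split.prems unfolding S_def by blast
  have st1: "finite P1 \<and> \<Union>P1 = S \<and> (\<forall>B\<in>P1. B \<noteq> {}) \<and> Suc k \<le> L1"
    using struct[OF split.hyps(6) dpos] unfolding S_def by blast
  have st2: "finite P2 \<and> \<Union>P2 = Vs - S \<and> (\<forall>B\<in>P2. B \<noteq> {}) \<and> Suc k \<le> L2"
    using struct[OF split.hyps(7) dpos] unfolding S_def by blast
  have dis: "P1 \<inter> P2 = {}"
  proof (rule ccontr)
    assume "P1 \<inter> P2 \<noteq> {}"
    then obtain B where "B \<in> P1" "B \<in> P2" by blast
    then have "B \<subseteq> S" "B \<subseteq> Vs - S" "B \<noteq> {}" using st1 st2 by auto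
    then show False by blast
  qed
  have fP: "finite P1" "finite P2" using st1 st2 by auto
  define M where "M = max L1 L2"
  have kM: "Suc k \<le> M" using st1 M_def by auto
  have a1: "(1::real) \<le> 1 + \<delta>" using dpos by simp
  define h where "h = (\<lambda>X. real (card (hatRset E par v0 X)))"
  have sh: "hatRset E par v0 Vs = hatRset E par v0 S \<union> hatRset E par v0 (Vs - S)"
    using SV hatRset_Un[of E par v0 S "Vs - S"] by (simp add: Un_absorb1 Un_Diff_cancel)
  have cu: "card (hatRset E par v0 S) + card (hatRset E par v0 (Vs - S))
      = card (hatRset E par v0 Vs) + card (hatRset E par v0 S \<inter> hatRset E par v0 (Vs - S))"
    using card_Un_Int[OF finite_hatRset[OF finE fS(1)] finite_hatRset[OF finE fS(2)]] sh by simp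
  have "hatRset E par v0 S \<inter> hatRset E par v0 (Vs - S) \<subseteq> hatRv E par v0 (par c) \<inter> hatRv E par v0 c"
    using shared[OF reach split.prems] unfolding S_def by blast
  moreover have "finite (hatRv E par v0 (par c) \<inter> hatRv E par v0 c)"
    unfolding hatRv_def using finite_Rv[OF finE] by blast
  ultimately have ci: "card (hatRset E par v0 S \<inter> hatRset E par v0 (Vs - S)) \<le> card (hatRv E par v0 (par c) \<inter> hatRv E par v0 c)"
    by (rule card_mono[rotated])
  have hsum: "h S + h (Vs - S) \<le> (1 + \<delta>) * h Vs"
  proof -
    have "h S + h (Vs - S) = h Vs + real (card (hatRset E par v0 S \<inter> hatRset E par v0 (Vs - S)))"
      unfolding h_def using cu by (metis of_nat_add)
    also have "\<dots> \<le> h Vs + \<delta> * h Vs" using ci split.hyps(5) unfolding h_def by linarith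
    finally show ?thesis by (simp add: algebra_simps)
  qed
  have p1: "(1 + \<delta>) ^ (L1 - Suc k) \<le> (1 + \<delta>) ^ (M - Suc k)"
    by (rule power_increasing[OF _ a1]) (simp add: M_def)
  have p2: "(1 + \<delta>) ^ (L2 - Suc k) \<le> (1 + \<delta>) ^ (M - Suc k)"
    by (rule power_increasing[OF _ a1]) (simp add: M_def)
  have hnn: "h X \<ge> 0" for X unfolding h_def by simp
  have "(\<Sum>B\<in>P1 \<union> P2. h B) = (\<Sum>B\<in>P1. h B) + (\<Sum>B\<in>P2. h B)"
    using sum.union_disjoint[OF fP dis] .
  also have "\<dots> \<le> h S * (1 + \<delta>) ^ (M - Suc k) + h (Vs - S) * (1 + \<delta>) ^ (M - Suc k)"
  proof -
    have "(\<Sum>B\<in>P1. h B) \<le> h S * (1 + \<delta>) ^ (M - Suc k)"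
      using IH1 p1 hnn[of S] mult_left_mono[OF p1 hnn[of S]] unfolding h_def by linarith
    moreover have "(\<Sum>B\<in>P2. h B) \<le> h (Vs - S) * (1 + \<delta>) ^ (M - Suc k)"
      using IH2 p2 mult_left_mono[OF p2 hnn[of "Vs - S"]] unfolding h_def by linarith
    ultimately show ?thesis by linarith
  qed
  also have "\<dots> = (h S + h (Vs - S)) * (1 + \<delta>) ^ (M - Suc k)" by (simp add: algebra_simps)
  also have "\<dots> \<le> (1 + \<delta>) * h Vs * (1 + \<delta>) ^ (M - Suc k)"
    using hsum by (rule mult_right_mono) (use dpos in simp)
  also have "\<dots> = h Vs * (1 + \<delta>) ^ (M - k)"
  proof -
    have "M - k = Suc (M - Suc k)" using kM by simp
    then show ?thesis by (simp add: algebra_simps)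
  qed
  finally have stor: "(\<Sum>B\<in>P1 \<union> P2. h B) \<le> h Vs * (1 + \<delta>) ^ (M - k)" .
  define g where "g = (\<lambda>B. real (card B) * real (card (block_recs E B)))"
  have ee: "edges_in E Vs = edges_in E S + edges_in E (Vs - S)"
  proof -
    have "{e \<in> E. fst e \<in> Vs} = {e \<in> E. fst e \<in> S} \<union> {e \<in> E. fst e \<in> Vs - S}" using SV by auto
    moreover have "{e \<in> E. fst e \<in> S} \<inter> {e \<in> E. fst e \<in> Vs - S} = {}" by auto
    ultimately show ?thesis unfolding edges_in_def using finE by (simp add: card_Un_disjoint)
  qed
  have "(\<Sum>B\<in>P1 \<union> P2. g B) = (\<Sum>B\<in>P1. g B) + (\<Sum>B\<in>P2. g B)"
    using sum.union_disjoint[OF fP dis] .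
  also have "\<dots> \<le> real (edges_in E S) / \<delta> + real (edges_in E (Vs - S)) / \<delta>"
    using IH1 IH2 unfolding g_def by linarith
  also have "\<dots> = real (edges_in E Vs) / \<delta>" using ee by (simp add: add_divide_distrib)
  finally have chk: "(\<Sum>B\<in>P1 \<union> P2. g B) \<le> real (edges_in E Vs) / \<delta>" .
  show ?case using stor chk unfolding h_def g_def M_def by simp
qed

theorem theorem3:
  fixes V :: "'v set" and E :: "('v \<times> 'r) set" and GE :: "('v \<times> 'v) set"
    and v0 :: 'v and par :: "'v \<Rightarrow> 'v" and \<delta> :: real
    and P :: "'v set set" and lvl :: nat
  assumes finV: "finite V" and finE: "finite E" and EV: "fst ` E \<subseteq> V"
    and GEV: "GE \<subseteq> V \<times> V" and dag: "acyclic GE"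
    and root: "v0 \<in> V" "\<forall>v\<in>V. (v \<noteq> v0) \<longleftrightarrow> (\<exists>u. (u, v) \<in> GE)"
    and par_edge: "\<forall>v\<in>V. v \<noteq> v0 \<longrightarrow> (par v, v) \<in> GE"
    and par_max: "\<forall>v\<in>V. v \<noteq> v0 \<longrightarrow> (\<forall>u. (u, v) \<in> GE \<longrightarrow> wt E u v \<le> wt E (par v) v)"
    and delta: "0 < \<delta>" "\<delta> \<le> 1"
    and run: "lyresplit \<delta> E par v0 V 0 P lvl"
  shows "\<Union>P = V \<and> (\<forall>B\<in>P. B \<noteq> {}) \<and> pairwise disjnt P
    \<and> real (storage_cost E P)
        \<le> (real (card (snd ` E)) + real (card_hatR E par v0 V)) / real (card (snd ` E))
            * (1 + \<delta>) ^ lvl * real (card (snd ` E))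
    \<and> avg_checkout_cost E V P \<le> (1 / \<delta>) * (real (card E) / real (card V))"
proof -
  have reach: "\<forall>v\<in>V. \<exists>n. (par ^^ n) v = v0"
    using reach_root[OF finV GEV dag par_edge] by simp
  have st: "finite P \<and> \<Union>P = V \<and> (\<forall>B\<in>P. B \<noteq> {}) \<and> pairwise disjnt P \<and> 0 \<le> lvl"
    using struct[OF run delta(1)] .
  have co: "(\<Sum>B\<in>P. real (card (hatRset E par v0 B))) \<le> real (card (hatRset E par v0 V)) * (1 + \<delta>) ^ lvl
     \<and> (\<Sum>B\<in>P. real (card B) * real (card (block_recs E B))) \<le> real (edges_in E V) / \<delta>"
    using costs[OF run delta(1) finE finV reach order_refl] by (simp only: diff_zero)
  have finP: "finite P" using st by blast
  have finB: "finite B" if "B \<in> P" for B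
  proof -
    have "B \<subseteq> V" using st that by blast
    then show ?thesis using finV by (rule finite_subset)
  qed
  define R where "R = card (snd ` E)"
  define H where "H = card (hatRset E par v0 V)"
  have sc1: "real (storage_cost E P) \<le> (\<Sum>B\<in>P. real (card (hatRset E par v0 B)))"
    unfolding storage_cost_def of_nat_sum
    by (rule sum_mono) (use card_block_recs[OF finE finB] in simp)
  have RH: "R \<le> H"
  proof -
    have "snd ` E \<subseteq> block_recs E V"
    proof
      fix x assume "x \<in> snd ` E"
      then obtain v where ve: "(v, x) \<in> E" by auto
      then have "v \<in> V" using EV by (metis fst_conv image_eqI subsetD)
      then show "x \<in> block_recs E V" using ve unfolding block_recs_def Rv_def by blast
    qed
    then have "R \<le> card (block_recs E V)" unfolding R_def
      by (rule card_mono[rotated]) (simp add: block_recs_def finite_Rv[OF finE] finV)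
    also have "\<dots> \<le> H" unfolding H_def by (rule card_block_recs[OF finE finV])
    finally show ?thesis .
  qed
  have stor: "real (storage_cost E P)
        \<le> (real (card (snd ` E)) + real (card_hatR E par v0 V)) / real (card (snd ` E))
            * (1 + \<delta>) ^ lvl * real (card (snd ` E))"
  proof (cases "R = 0")
    case True
    then have "E = {}" unfolding R_def using finE by simp
    then have "storage_cost E P = 0" unfolding storage_cost_def block_recs_def Rv_def by simp
    then show ?thesis using True unfolding R_def by simp
  next
    case False
    have "card_hatR E par v0 V = H - R" unfolding card_hatR_def H_def R_def by simp
    then have "real (card (snd ` E)) + real (card_hatR E par v0 V) = real H" using RH unfolding R_def by simp
    then have "(real (card (snd ` E)) + real (card_hatR E par v0 V)) / real (card (snd ` E))
            * (1 + \<delta>) ^ lvl * real (card (snd ` E)) = real H * (1 + \<delta>) ^ lvl"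
      using False unfolding R_def by simp
    then show ?thesis using sc1 co unfolding H_def by linarith
  qed
  have "{e \<in> E. fst e \<in> V} = E" using EV by blast
  then have eV: "edges_in E V = card E" unfolding edges_in_def by simp
  have "V \<noteq> {}" using root(1) by blast
  then have "card V > 0" using finV by (simp add: card_gt_0_iff)
  then have cV: "real (card V) > 0" by simp
  have "avg_checkout_cost E V P \<le> (real (card E) / \<delta>) / real (card V)"
  proof -
    have "(\<Sum>B\<in>P. real (card B) * real (card (block_recs E B))) \<le> real (card E) / \<delta>"
      using co eV by simp
    from divide_right_mono[OF this less_imp_le[OF cV]]
    show ?thesis unfolding avg_checkout_cost_def .
  qed
  also have "\<dots> = (1 / \<delta>) * (real (card E) / real (card V))" by simp
  finally have chk: "avg_checkout_cost E V P \<le> (1 / \<delta>) * (real (card E) / real (card V))" .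
  show ?thesis using st stor chk by blast
qed

end
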